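(* Let $\mathbb{F}$ be a field of characteristic $2$, $\mathbb{F}'\subseteq\mathbb{F}$ a subfield, and $h$ a positive integer. Let $S\subseteq\mathbb{F}$ be a set with $|S|=n$ that is $2h$-wise independent over $\mathbb{F}'$. Let $r$ be a positive integer such that $\ell=\frac{n}{r+1}$ is an integer, and index the elements of $S$ as $S=\{\alpha_{i,s}\}_{i\in[\ell],s\in[r+1]}$. Then for every ${\bf e}\in[r+1]^\ell$ the multi-set $T(S,{\bf e})=\{\alpha_{i,s}+\alpha_{i,{\bf e}(i)}\}_{i\in[\ell],\,s\in[r+1]\setminus\{{\bf e}(i)\}}$ is $h$-wise independent over $\mathbb{F}'$.
   Context: A multi-set $T\subseteq\mathbb{F}$ is $t$-wise independent over a subfield $\mathbb{F}'$ if every sub-multi-set of $T$ of size at most $t$ is linearly independent over $\mathbb{F}'$. *)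

theory Defs
  imports Main
begin

definition is_subfield :: "'a::field set \<Rightarrow> bool" where
  "is_subfield K \<longleftrightarrow> 0 \<in> K \<and> 1 \<in> K \<and>
     (\<forall>x\<in>K. \<forall>y\<in>K. x + y \<in> K \<and> x * y \<in> K) \<and>
     (\<forall>x\<in>K. - x \<in> K) \<and> (\<forall>x\<in>K. x \<noteq> 0 \<longrightarrow> inverse x \<in> K)"

definition lin_indep_over :: "'a::field set \<Rightarrow> ('i \<Rightarrow> 'a) \<Rightarrow> 'i set \<Rightarrow> bool" where
  "lin_indep_over K v J \<longleftrightarrow>
     (\<forall>c. (\<forall>j\<in>J. c j \<in> K) \<longrightarrow> (\<Sum>j\<in>J. c j * v j) = 0 \<longrightarrow> (\<forall>j\<in>J. c j = 0))"

text \<open>The multi-set given by the family v indexed by I is t-wise independent over K: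
  every sub-multi-set (sub-family) of size at most t is linearly independent over K.\<close>
definition twise_indep :: "'a::field set \<Rightarrow> nat \<Rightarrow> ('i \<Rightarrow> 'a) \<Rightarrow> 'i set \<Rightarrow> bool" where
  "twise_indep K t v I \<longleftrightarrow>
     (\<forall>J. J \<subseteq> I \<and> finite J \<and> card J \<le> t \<longrightarrow> lin_indep_over K v J)"

end

theory Submission
  imports Defs
begin

lemma sum_in_subfield:
  assumes "is_subfield K" "\<forall>x\<in>A. g x \<in> K"
  shows "sum g A \<in> K"
proof (cases "finite A")
  case True
  then show ?thesis using assms(2)
  proof (induction A rule: finite_induct)
    case empty then show ?case using assms(1) by (simp add: is_subfield_def)
  next
    case (insert x F) then show ?case using assms(1) by (simp add: is_subfield_def)
  qed
next
  case False then show ?thesis using assms(1) by (simp add: is_subfield_def)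
qed

theorem lemma11:
  fixes K :: "'a::field set" and S :: "'a set" and h n r l :: nat
    and \<alpha> :: "nat \<Rightarrow> nat \<Rightarrow> 'a" and e :: "nat \<Rightarrow> nat"
  assumes "CHAR('a) = 2"
    and "is_subfield K"
    and "h > 0"
    and "finite S" and "card S = n"
    and "twise_indep K (2 * h) id S"
    and "r > 0"
    and "n = l * (r + 1)"
    and "bij_betw (\<lambda>(i, s). \<alpha> i s) ({0..<l} \<times> {0..<r+1}) S"
    and "\<forall>i<l. e i < r + 1"
  shows "twise_indep K h (\<lambda>(i, s). \<alpha> i s + \<alpha> i (e i))
           {(i, s). i < l \<and> s < r + 1 \<and> s \<noteq> e i}"
  unfolding twise_indep_def
proof (intro allI impI)
  fix J assume HJ: "J \<subseteq> {(i, s). i < l \<and> s < r + 1 \<and> s \<noteq> e i} \<and> finite J \<and> card J \<le> h"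
  define a where "a = (\<lambda>(i, s). \<alpha> i s)"
  define G where "G = {0..<l} \<times> {0..<r+1}"
  define f where "f = (\<lambda>p::nat\<times>nat. (fst p, e (fst p)))"
  have bij: "bij_betw a G S" using assms(9) unfolding a_def G_def .
  have inj: "inj_on a G" using bij bij_betw_def by blast
  have JG: "J \<subseteq> G" using HJ unfolding G_def by auto
  have fJ: "finite J" using HJ by blast
  define E where "E = f ` J"
  have EG: "E \<subseteq> G" using HJ assms(10) unfolding E_def G_def f_def by auto
  have disj: "J \<inter> E = {}" using HJ unfolding E_def f_def by auto
  define D where "D = J \<union> E"
  have fD: "finite D" using fJ unfolding D_def E_def by blast
  have DG: "D \<subseteq> G" using JG EG D_def by blast
  have cardD: "card D \<le> 2 * h"
  proof -
    have "card D \<le> card J + card E" unfolding D_def by (rule card_Un_le)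
    also have "card E \<le> card J" unfolding E_def using fJ by (rule card_image_le)
    finally show ?thesis using HJ by linarith
  qed
  show "lin_indep_over K (\<lambda>(i, s). \<alpha> i s + \<alpha> i (e i)) J"
    unfolding lin_indep_over_def
  proof (intro allI impI)
    fix c assume cK: "\<forall>j\<in>J. c j \<in> K"
      and csum: "(\<Sum>j\<in>J. c j * (case j of (i, s) \<Rightarrow> \<alpha> i s + \<alpha> i (e i))) = 0"
    define d where "d = (\<lambda>p. if p \<in> J then c p else sum c {p'\<in>J. f p' = p})"
    have dK: "\<forall>p\<in>D. d p \<in> K"
    proof
      fix p assume "p \<in> D"
      show "d p \<in> K"
      proof (cases "p \<in> J")
        case True then show ?thesis using cK unfolding d_def by simp
      next
        case False
        have "sum c {p'\<in>J. f p' = p} \<in> K" by (rule sum_in_subfield[OF assms(2)]) (use cK in auto)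
        then show ?thesis using False unfolding d_def by simp
      qed
    qed
    have eq1: "(\<Sum>j\<in>J. c j * (case j of (i, s) \<Rightarrow> \<alpha> i s + \<alpha> i (e i)))
        = (\<Sum>j\<in>J. c j * a j) + (\<Sum>j\<in>J. c j * a (f j))"
      unfolding a_def f_def by (auto simp: sum.distrib[symmetric] distrib_left intro!: sum.cong)
    have eq2: "(\<Sum>j\<in>J. c j * a (f j)) = (\<Sum>q\<in>E. d q * a q)"
    proof -
      have "(\<Sum>j\<in>J. c j * a (f j)) = (\<Sum>q\<in>E. \<Sum>j\<in>{x\<in>J. f x = q}. c j * a (f j))"
        using sum.group[OF fJ _ , of "f ` J" f "\<lambda>j. c j * a (f j)"] fJ unfolding E_def by auto
      also have "\<dots> = (\<Sum>q\<in>E. d q * a q)"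
      proof (rule sum.cong)
        fix q assume "q \<in> E"
        then have "q \<notin> J" using disj by blast
        then show "(\<Sum>j\<in>{x\<in>J. f x = q}. c j * a (f j)) = d q * a q"
          unfolding d_def by (simp add: sum_distrib_right)
      qed simp
      finally show ?thesis .
    qed
    have eqD: "(\<Sum>p\<in>D. d p * a p) = 0"
    proof -
      have "(\<Sum>p\<in>D. d p * a p) = (\<Sum>p\<in>J. d p * a p) + (\<Sum>p\<in>E. d p * a p)"
        unfolding D_def using fJ disj E_def by (simp add: sum.union_disjoint)
      also have "(\<Sum>p\<in>J. d p * a p) = (\<Sum>p\<in>J. c p * a p)" unfolding d_def by simp
      finally show ?thesis using eq1 eq2 csum by simp
    qed
    define c' where "c' = (\<lambda>x. d (the_inv_into G a x))"
    have injD: "inj_on a D" using inj DG inj_on_subset by blast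
    have c'a: "c' (a p) = d p" if "p \<in> D" for p
    proof -
      have "p \<in> G" using that DG by blast
      then show ?thesis unfolding c'_def using the_inv_into_f_f[OF inj] by simp
    qed
    have sub: "a ` D \<subseteq> S" using DG bij bij_betw_imp_surj_on by blast
    have cardaD: "card (a ` D) \<le> 2 * h" using cardD card_image_le[OF fD, of a] by linarith
    have li: "lin_indep_over K id (a ` D)"
      using assms(6) sub cardaD fD unfolding twise_indep_def by blast
    have "(\<Sum>x\<in>a ` D. c' x * id x) = (\<Sum>p\<in>D. c' (a p) * a p)"
      using sum.reindex[OF injD] by simp
    also have "\<dots> = (\<Sum>p\<in>D. d p * a p)" using c'a by simp
    finally have s0: "(\<Sum>x\<in>a ` D. c' x * id x) = 0" using eqD by simp
    have "\<forall>x\<in>a ` D. c' x \<in> K" using c'a dK by auto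
    then have z: "\<forall>x\<in>a ` D. c' x = 0" using li s0 unfolding lin_indep_over_def by blast
    show "\<forall>j\<in>J. c j = 0"
    proof
      fix j assume "j \<in> J"
      then have "j \<in> D" unfolding D_def by blast
      then have "d j = 0" using z c'a[of j] by (metis image_eqI)
      then show "c j = 0" using \<open>j \<in> J\<close> unfolding d_def by simp
    qed
  qed
qed

end
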